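(* Let $E$ be an $S$-scaled vector space and $u:E\to E$ a $1$-bounded $\tau$-morphism. For every $s\in]0,\tau[$ satisfying $\frac{3N_\tau^1(u)}{\tau-s}\le\frac12$ and every $x\in E_\tau$, one has: 1) $|(e^{-u}(\mathrm{Id}+u)-\mathrm{Id})x|_s\le\frac{36|x|_\tau}{(\tau-s)^2}N_\tau^1(u)^2$; 2) $|(e^{-u}(\mathrm{Id}+u)-\mathrm{Id})x|_s\le\frac{2|u(x)|_\tau}{\tau-s}N_\tau^1(u)$; 3) $|(e^{-u}-\mathrm{Id})x|_s\le\frac{6|x|_\tau}{\tau-s}N_\tau^1(u)$; 4) $|(e^{-u}-\mathrm{Id})x|_s\le 2|u(x)|_\tau$; 5) $|e^ux|_s\le 2|x|_\tau$.
   Context: An $S$-scaled vector space is $E=\bigcup_{s\in]0,S[}E_s$ where $(E_s)$ is a decreasing family of Banach spaces (norms $|\cdot|_s$) with inclusions $E_{s+\sigma}\subset E_s$ of norm $\le1$, with the direct-limit topology. A linear map $u:E\to E$ is a $\tau$-morphism if $u(E_{s'})\subset E_s$ continuously for all $s'\in]0,\tau]$, $s\in]0,s'[$; it is $1$-bounded if $|u(x)|_s\le C\sigma^{-1}|x|_{s+\sigma}$ for all $s\in]0,\tau[$, $\sigma\in]0,\tau-s]$, $x\in E_{s+\sigma}$, and $N_\tau^1(u)$ is the smallest such $C$. $e^{\pm u}:=\sum_{j\ge0}(\pm u)^j/j!$. In 2) and 4), $|y|_\tau$ is understood as $+\infty$ if $y\notin E_\tau$. *)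

theory Defs
  imports "HOL-Analysis.Analysis"
begin

text \<open>An S-scaled vector space inside an ambient real vector space 'a:
  Es s is the Banach space E_s (for 0 < s < S), with norm nm s.\<close>

definition scaled_space :: "real \<Rightarrow> (real \<Rightarrow> 'a::real_vector set) \<Rightarrow> (real \<Rightarrow> 'a \<Rightarrow> real) \<Rightarrow> bool" where
  "scaled_space S Es nm \<longleftrightarrow> S > 0 \<and>
     (\<forall>s\<in>{0<..<S}.
        0 \<in> Es s \<and>
        (\<forall>x\<in>Es s. \<forall>y\<in>Es s. x + y \<in> Es s) \<and>
        (\<forall>c. \<forall>x\<in>Es s. c *\<^sub>R x \<in> Es s) \<and>
        (\<forall>x\<in>Es s. nm s x \<ge> 0 \<and> (nm s x = 0 \<longleftrightarrow> x = 0)) \<and>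
        (\<forall>c. \<forall>x\<in>Es s. nm s (c *\<^sub>R x) = \<bar>c\<bar> * nm s x) \<and>
        (\<forall>x\<in>Es s. \<forall>y\<in>Es s. nm s (x + y) \<le> nm s x + nm s y) \<and>
        (\<forall>X. (\<forall>n. X n \<in> Es s) \<longrightarrow>
              (\<forall>e>0. \<exists>N. \<forall>m\<ge>N. \<forall>n\<ge>N. nm s (X m - X n) < e) \<longrightarrow>
              (\<exists>L\<in>Es s. (\<lambda>n. nm s (X n - L)) \<longlonglongrightarrow> 0))) \<and>
     (\<forall>s\<in>{0<..<S}. \<forall>s'\<in>{0<..<S}. s < s' \<longrightarrow>
        Es s' \<subseteq> Es s \<and> (\<forall>x\<in>Es s'. nm s x \<le> nm s' x))"

definition scaled_union :: "real \<Rightarrow> (real \<Rightarrow> 'a set) \<Rightarrow> 'a set" where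
  "scaled_union S Es = (\<Union>s\<in>{0<..<S}. Es s)"

definition tau_morphism :: "real \<Rightarrow> (real \<Rightarrow> 'a::real_vector set) \<Rightarrow> (real \<Rightarrow> 'a \<Rightarrow> real) \<Rightarrow> real \<Rightarrow> ('a \<Rightarrow> 'a) \<Rightarrow> bool" where
  "tau_morphism S Es nm \<tau> u \<longleftrightarrow>
     (\<forall>x\<in>scaled_union S Es. u x \<in> scaled_union S Es) \<and>
     (\<forall>x\<in>scaled_union S Es. \<forall>y\<in>scaled_union S Es. u (x + y) = u x + u y) \<and>
     (\<forall>c. \<forall>x\<in>scaled_union S Es. u (c *\<^sub>R x) = c *\<^sub>R u x) \<and>
     (\<forall>s'\<in>{0<..\<tau>}. \<forall>s\<in>{0<..<s'}. u ` Es s' \<subseteq> Es s \<and>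
        (\<exists>C. \<forall>x\<in>Es s'. nm s (u x) \<le> C * nm s' x))"

definition one_bound_const :: "(real \<Rightarrow> 'a set) \<Rightarrow> (real \<Rightarrow> 'a \<Rightarrow> real) \<Rightarrow> real \<Rightarrow> ('a \<Rightarrow> 'a) \<Rightarrow> real \<Rightarrow> bool" where
  "one_bound_const Es nm \<tau> u C \<longleftrightarrow> C \<ge> 0 \<and>
     (\<forall>s\<in>{0<..<\<tau>}. \<forall>\<sigma>\<in>{0<..\<tau> - s}. \<forall>x\<in>Es (s + \<sigma>). nm s (u x) \<le> C / \<sigma> * nm (s + \<sigma>) x)"

definition one_bounded :: "(real \<Rightarrow> 'a set) \<Rightarrow> (real \<Rightarrow> 'a \<Rightarrow> real) \<Rightarrow> real \<Rightarrow> ('a \<Rightarrow> 'a) \<Rightarrow> bool" where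
  "one_bounded Es nm \<tau> u \<longleftrightarrow> (\<exists>C. one_bound_const Es nm \<tau> u C)"

definition N1 :: "(real \<Rightarrow> 'a set) \<Rightarrow> (real \<Rightarrow> 'a \<Rightarrow> real) \<Rightarrow> real \<Rightarrow> ('a \<Rightarrow> 'a) \<Rightarrow> real" where
  "N1 Es nm \<tau> u = Inf {C. one_bound_const Es nm \<tau> u C}"

text \<open>exp_conv Es nm s u x y: the series sum_j u^j x / j! converges in E_s
  (all terms in E_s, convergence in the norm of E_s) to y \<in> E_s, i.e. y = e^u x.\<close>
definition exp_conv :: "(real \<Rightarrow> 'a::real_vector set) \<Rightarrow> (real \<Rightarrow> 'a \<Rightarrow> real) \<Rightarrow> real \<Rightarrow> ('a \<Rightarrow> 'a) \<Rightarrow> 'a \<Rightarrow> 'a \<Rightarrow> bool" where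
  "exp_conv Es nm s u x y \<longleftrightarrow> (\<forall>j. (u ^^ j) x \<in> Es s) \<and> y \<in> Es s \<and>
     (\<lambda>n. nm s ((\<Sum>j<n. inverse (fact j) *\<^sub>R (u ^^ j) x) - y)) \<longlonglongrightarrow> 0"

end

theory Submission
  imports Defs
begin


lemma one_plus_pow_le3:
  assumes "k \<ge> 1" shows "(real k + 1) ^ k \<le> 3 * real k ^ k"
proof -
  have kp: "real k > 0" using assms by simp
  have "(1 + 1 / real k) ^ k \<le> exp (1 / real k) ^ k"
    by (rule power_mono) (auto intro: order_trans[OF _ exp_ge_add_one_self])
  also have "\<dots> = exp (real k * (1 / real k))" by (simp only: exp_of_nat_mult)
  also have "\<dots> = exp 1" using kp by simp
  also have "\<dots> \<le> 3" by (rule exp_le)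
  finally have "(1 + 1 / real k) ^ k \<le> 3" .
  moreover have "(real k + 1) ^ k = real k ^ k * (1 + 1 / real k) ^ k"
    using kp by (simp add: power_mult_distrib[symmetric] field_simps)
  ultimately show ?thesis using kp
    by (metis mult.commute mult_le_cancel_left_pos zero_less_power)
qed

lemma pow_fact_le:
  assumes "k \<ge> 1" shows "real k ^ k \<le> 3 ^ (k - 1) * fact k"
  using assms
proof (induction k rule: dec_induct)
  case base then show ?case by simp
next
  case (step k)
  have "real (Suc k) ^ Suc k = (real k + 1) * (real k + 1) ^ k" by (simp add: add.commute)
  also have "\<dots> \<le> (real k + 1) * (3 * real k ^ k)"
    using one_plus_pow_le3[OF step(1)] by (intro mult_left_mono) auto
  also have "\<dots> \<le> (real k + 1) * (3 * (3 ^ (k - 1) * fact k))"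
    using step(3) by (intro mult_left_mono) auto
  also have "\<dots> = 3 ^ (Suc k - 1) * fact (Suc k)"
    using step(1) by (cases k) (auto simp: algebra_simps)
  finally show ?case .
qed

lemma pow_fact_le0: "real k ^ k \<le> 3 ^ k * fact k"
proof (cases "k = 0")
  case False
  then have "real k ^ k \<le> 3 ^ (k - 1) * fact k" by (intro pow_fact_le) auto
  also have "\<dots> \<le> 3 ^ k * fact k" by (intro mult_right_mono power_increasing) auto
  finally show ?thesis .
qed simp

lemma geom_le2:
  fixes q :: real assumes "0 \<le> q" "q \<le> 1/2"
  shows "(\<Sum>k<n. q ^ k) \<le> 2"
proof -
  have "(\<Sum>k<n. q ^ k) = (1 - q ^ n) / (1 - q)" using assms by (simp add: sum_gp_strict)
  also have "\<dots> \<le> 1 / (1 - q)" using assms by (intro divide_right_mono) auto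
  also have "\<dots> \<le> 2" using assms by (simp add: field_simps)
  finally show ?thesis .
qed

lemma arith_geo_closed:
  fixes q :: real
  shows "(\<Sum>k<n. real k * q ^ k) * (1 - q)^2 = q - real n * q ^ n + (real n - 1) * q ^ (n + 1)"
proof (induction n)
  case 0 then show ?case by simp
next
  case (Suc n)
  have "(\<Sum>k<Suc n. real k * q ^ k) * (1 - q)^2 = (\<Sum>k<n. real k * q ^ k) * (1 - q)^2 + real n * q^n * (1-q)^2"
    by (simp add: algebra_simps)
  also have "\<dots> = q - real (Suc n) * q ^ (Suc n) + (real (Suc n) - 1) * q ^ (Suc n + 1)"
    unfolding Suc by (simp add: power2_eq_square algebra_simps)
  finally show ?case .
qed

lemma arith_geo_le:
  fixes q :: real assumes "0 \<le> q" "q \<le> 1/2"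
  shows "(\<Sum>k<n. real k * q ^ k) \<le> 4 * q"
proof -
  have h: "(\<Sum>k<n. real k * q ^ k) * (1 - q)^2 \<le> q"
  proof (cases n)
    case 0 then show ?thesis using assms by simp
  next
    case (Suc m)
    have "(real n - 1) * q ^ (n + 1) \<le> real n * q ^ n"
    proof -
      have "(real n - 1) * q ^ (n + 1) \<le> real n * q ^ (n+1)" using assms by (intro mult_right_mono) auto
      also have "\<dots> \<le> real n * q ^ n" using assms by (intro mult_left_mono power_decreasing) auto
      finally show ?thesis .
    qed
    then show ?thesis unfolding arith_geo_closed by linarith
  qed
  have "(1/2::real)^2 \<le> (1 - q)^2" using assms by (intro power_mono) auto
  then have "(1 - q)^2 \<ge> 1/4" by (simp add: power2_eq_square)
  moreover have "(\<Sum>k<n. real k * q ^ k) \<ge> 0" using assms by (intro sum_nonneg) auto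
  ultimately have "(\<Sum>k<n. real k * q ^ k) * (1/4) \<le> q"
    using h by (meson mult_left_mono order_trans)
  then show ?thesis by simp
qed




context
  fixes S :: real and Es :: "real \<Rightarrow> 'a::real_vector set" and nm s
  assumes SS: "scaled_space S Es nm" and sI: "s \<in> {0<..<S}"
begin

lemma sp_P: "0 \<in> Es s \<and>
        (\<forall>x\<in>Es s. \<forall>y\<in>Es s. x + y \<in> Es s) \<and>
        (\<forall>c. \<forall>x\<in>Es s. c *\<^sub>R x \<in> Es s) \<and>
        (\<forall>x\<in>Es s. nm s x \<ge> 0 \<and> (nm s x = 0 \<longleftrightarrow> x = 0)) \<and>
        (\<forall>c. \<forall>x\<in>Es s. nm s (c *\<^sub>R x) = \<bar>c\<bar> * nm s x) \<and>
        (\<forall>x\<in>Es s. \<forall>y\<in>Es s. nm s (x + y) \<le> nm s x + nm s y) \<and>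
        (\<forall>X. (\<forall>n. X n \<in> Es s) \<longrightarrow>
              (\<forall>e>0. \<exists>N. \<forall>m\<ge>N. \<forall>n\<ge>N. nm s (X m - X n) < e) \<longrightarrow>
              (\<exists>L\<in>Es s. (\<lambda>n. nm s (X n - L)) \<longlonglongrightarrow> 0))"
proof -
  have "\<forall>s\<in>{0<..<S}. 0 \<in> Es s \<and>
        (\<forall>x\<in>Es s. \<forall>y\<in>Es s. x + y \<in> Es s) \<and>
        (\<forall>c. \<forall>x\<in>Es s. c *\<^sub>R x \<in> Es s) \<and>
        (\<forall>x\<in>Es s. nm s x \<ge> 0 \<and> (nm s x = 0 \<longleftrightarrow> x = 0)) \<and>
        (\<forall>c. \<forall>x\<in>Es s. nm s (c *\<^sub>R x) = \<bar>c\<bar> * nm s x) \<and>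
        (\<forall>x\<in>Es s. \<forall>y\<in>Es s. nm s (x + y) \<le> nm s x + nm s y) \<and>
        (\<forall>X. (\<forall>n. X n \<in> Es s) \<longrightarrow>
              (\<forall>e>0. \<exists>N. \<forall>m\<ge>N. \<forall>n\<ge>N. nm s (X m - X n) < e) \<longrightarrow>
              (\<exists>L\<in>Es s. (\<lambda>n. nm s (X n - L)) \<longlonglongrightarrow> 0))"
    using SS unfolding scaled_space_def by (elim conjE)
  then show ?thesis using sI by (rule bspec)
qed

lemmas sp_P1 = sp_P[THEN conjunct1]
lemmas sp_P2 = sp_P[THEN conjunct2, THEN conjunct1]
lemmas sp_P3 = sp_P[THEN conjunct2, THEN conjunct2, THEN conjunct1]
lemmas sp_P4 = sp_P[THEN conjunct2, THEN conjunct2, THEN conjunct2, THEN conjunct1]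
lemmas sp_P5 = sp_P[THEN conjunct2, THEN conjunct2, THEN conjunct2, THEN conjunct2, THEN conjunct1]
lemmas sp_P6 = sp_P[THEN conjunct2, THEN conjunct2, THEN conjunct2, THEN conjunct2, THEN conjunct2, THEN conjunct1]
lemmas sp_P7 = sp_P[THEN conjunct2, THEN conjunct2, THEN conjunct2, THEN conjunct2, THEN conjunct2, THEN conjunct2]

lemma sp_zero: "0 \<in> Es s" by (rule sp_P1)
lemma sp_add: "x \<in> Es s \<Longrightarrow> y \<in> Es s \<Longrightarrow> x + y \<in> Es s" using sp_P2 by blast
lemma sp_scal: "x \<in> Es s \<Longrightarrow> c *\<^sub>R x \<in> Es s" using sp_P3 by blast
lemma sp_nn: "x \<in> Es s \<Longrightarrow> nm s x \<ge> 0" using sp_P4 by blast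
lemma sp_nm0: "nm s 0 = 0" using sp_P4 sp_zero by blast
lemma sp_hom: "x \<in> Es s \<Longrightarrow> nm s (c *\<^sub>R x) = \<bar>c\<bar> * nm s x" using sp_P5 by blast
lemma sp_tri: "x \<in> Es s \<Longrightarrow> y \<in> Es s \<Longrightarrow> nm s (x + y) \<le> nm s x + nm s y" using sp_P6 by blast
lemma sp_compl: "(\<forall>n. X n \<in> Es s) \<Longrightarrow> (\<forall>e>0. \<exists>N. \<forall>m\<ge>N. \<forall>n\<ge>N. nm s (X m - X n) < e) \<Longrightarrow>
              (\<exists>L\<in>Es s. (\<lambda>n. nm s (X n - L)) \<longlonglongrightarrow> 0)" using sp_P7 by blast

lemma sp_diff: "x \<in> Es s \<Longrightarrow> y \<in> Es s \<Longrightarrow> x - y \<in> Es s"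
  using sp_add[of x "(-1) *\<^sub>R y"] sp_scal[of y "-1"] by simp

lemma sp_neg: "x \<in> Es s \<Longrightarrow> nm s (- x) = nm s x"
  using sp_hom[of x "-1"] by simp

lemma sp_sym: "x \<in> Es s \<Longrightarrow> y \<in> Es s \<Longrightarrow> nm s (x - y) = nm s (y - x)"
  using sp_neg[of "y - x"] sp_diff[of y x] by simp

lemma sp_sum: "(\<And>i. i \<in> A \<Longrightarrow> f i \<in> Es s) \<Longrightarrow> sum f A \<in> Es s"
  by (induction A rule: infinite_finite_induct) (auto simp: sp_zero sp_add)

lemma sp_sumnorm: "(\<And>i. i \<in> A \<Longrightarrow> f i \<in> Es s) \<Longrightarrow> nm s (sum f A) \<le> (\<Sum>i\<in>A. nm s (f i))"
proof (induction A rule: infinite_finite_induct)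
  case (insert x F)
  have "nm s (sum f (insert x F)) = nm s (f x + sum f F)" using insert by simp
  also have "\<dots> \<le> nm s (f x) + nm s (sum f F)" using insert by (intro sp_tri sp_sum) auto
  also have "\<dots> \<le> nm s (f x) + (\<Sum>i\<in>F. nm s (f i))" using insert by auto
  finally show ?case using insert by simp
qed (auto simp: sp_nm0)

lemma sp_conv:
  assumes a: "\<And>j. a j \<in> Es s" and b: "\<And>j. nm s (a j) \<le> b j" and sb: "summable b"
  shows "\<exists>y\<in>Es s. (\<lambda>n. nm s ((\<Sum>j<n. a j) - y)) \<longlonglongrightarrow> 0"
proof (rule sp_compl[of "\<lambda>n. \<Sum>j<n. a j", simplified])
  show "\<forall>n. (\<Sum>j<n. a j) \<in> Es s" using a by (auto intro: sp_sum)
  show "\<forall>e>0. \<exists>N. \<forall>m\<ge>N. \<forall>n\<ge>N. nm s ((\<Sum>j<m. a j) - (\<Sum>j<n. a j)) < e"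
  proof (intro allI impI)
    fix e :: real assume e: "e > 0"
    from sb[unfolded summable_Cauchy] e obtain N where N: "\<And>m n. m \<ge> N \<Longrightarrow> norm (sum b {m..<n}) < e" by blast
    have key: "nm s ((\<Sum>j<m. a j) - (\<Sum>j<n. a j)) < e" if "n \<ge> N" "n \<le> m" for m n
    proof -
      have "(\<Sum>j<m. a j) - (\<Sum>j<n. a j) = sum a {n..<m}"
        using sum.atLeastLessThan_concat[of 0 n m a] that by (simp add: atLeast0LessThan) (metis add_diff_cancel_left')
      then have "nm s ((\<Sum>j<m. a j) - (\<Sum>j<n. a j)) \<le> (\<Sum>j\<in>{n..<m}. nm s (a j))"
        using sp_sumnorm[of "{n..<m}" a] a by simp
      also have "\<dots> \<le> sum b {n..<m}" using b by (intro sum_mono) auto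
      also have "\<dots> \<le> norm (sum b {n..<m})" by simp
      also have "\<dots> < e" using N that by auto
      finally show ?thesis .
    qed
    show "\<exists>N. \<forall>m\<ge>N. \<forall>n\<ge>N. nm s ((\<Sum>j<m. a j) - (\<Sum>j<n. a j)) < e"
    proof (intro exI allI impI)
      fix m n assume "m \<ge> N" "n \<ge> N"
      show "nm s ((\<Sum>j<m. a j) - (\<Sum>j<n. a j)) < e"
      proof (cases "n \<le> m")
        case True then show ?thesis using key \<open>n \<ge> N\<close> by auto
      next
        case False
        have "nm s ((\<Sum>j<m. a j) - (\<Sum>j<n. a j)) = nm s ((\<Sum>j<n. a j) - (\<Sum>j<m. a j))"
          using a by (intro sp_sym sp_sum) auto
        then show ?thesis using key[of m n] False \<open>m \<ge> N\<close> by auto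
      qed
    qed
  qed
qed

lemma sp_limbound:
  assumes y: "y \<in> Es s" and Sn: "\<And>n. T n \<in> Es s" and lim: "(\<lambda>n. nm s (T n - y)) \<longlonglongrightarrow> 0"
    and c: "c \<in> Es s" and ev: "\<And>n. n \<ge> N \<Longrightarrow> nm s (T n - c) \<le> B"
  shows "nm s (y - c) \<le> B"
proof -
  have E: "\<forall>\<^sub>F n in sequentially. nm s (y - c) \<le> nm s (T n - y) + B"
  proof (rule eventually_sequentiallyI[of N])
    fix n assume "n \<ge> N"
    have "nm s (y - c) = nm s ((y - T n) + (T n - c))" by simp
    also have "\<dots> \<le> nm s (y - T n) + nm s (T n - c)" using y Sn c by (intro sp_tri sp_diff) auto
    also have "\<dots> = nm s (T n - y) + nm s (T n - c)" using y Sn by (simp add: sp_sym)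
    also have "\<dots> \<le> nm s (T n - y) + B" using ev[OF \<open>n \<ge> N\<close>] by simp
    finally show "nm s (y - c) \<le> nm s (T n - y) + B" .
  qed
  have L: "(\<lambda>n. nm s (T n - y) + B) \<longlonglongrightarrow> 0 + B" by (intro tendsto_add lim tendsto_const)
  have "nm s (y - c) \<le> 0 + B"
    by (rule tendsto_le[OF trivial_limit_sequentially L tendsto_const E])
  then show ?thesis by simp
qed

end



lemma N1_ok:
  assumes "one_bounded Es nm \<tau> u"
  shows "one_bound_const Es nm \<tau> u (N1 Es nm \<tau> u)"
proof -
  let ?A = "{C. one_bound_const Es nm \<tau> u C}"
  let ?N = "N1 Es nm \<tau> u"
  have ne: "?A \<noteq> {}" using assms unfolding one_bounded_def by blast
  have bb: "bdd_below ?A" unfolding bdd_below_def one_bound_const_def by (intro exI[of _ 0]) auto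
  have nn: "?N \<ge> 0" unfolding N1_def
    by (rule cInf_greatest[OF ne]) (auto simp: one_bound_const_def)
  have "nm s (u x) \<le> ?N / \<sigma> * nm (s + \<sigma>) x"
    if s: "s \<in> {0<..<\<tau>}" and sg: "\<sigma> \<in> {0<..\<tau> - s}" and x: "x \<in> Es (s + \<sigma>)" for s \<sigma> x
  proof -
    have all: "nm s (u x) \<le> C / \<sigma> * nm (s + \<sigma>) x" if "C \<in> ?A" for C
      using that s sg x unfolding one_bound_const_def by blast
    obtain C0 where C0: "C0 \<in> ?A" using ne by blast
    have le: "?N \<le> C0" unfolding N1_def by (rule cInf_lower[OF C0 bb])
    have sp: "\<sigma> > 0" using sg by simp
    show ?thesis
    proof (cases "nm (s + \<sigma>) x \<le> 0")
      case True
      have "nm s (u x) \<le> C0 / \<sigma> * nm (s + \<sigma>) x" using all C0 .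
      also have "\<dots> \<le> ?N / \<sigma> * nm (s + \<sigma>) x"
        using True le sp by (intro mult_right_mono_neg divide_right_mono) auto
      finally show ?thesis .
    next
      case False
      then have mp: "nm (s + \<sigma>) x > 0" by simp
      have "nm s (u x) * \<sigma> / nm (s + \<sigma>) x \<le> ?N" unfolding N1_def
      proof (rule cInf_greatest[OF ne])
        fix C assume "C \<in> ?A"
        then have "nm s (u x) \<le> C / \<sigma> * nm (s + \<sigma>) x" by (rule all)
        then show "nm s (u x) * \<sigma> / nm (s + \<sigma>) x \<le> C" using mp sp by (simp add: field_simps)
      qed
      then show ?thesis using mp sp by (simp add: field_simps)
    qed
  qed
  then show ?thesis unfolding one_bound_const_def using nn by blast
qed

context
  fixes S \<tau> :: real and Es :: "real \<Rightarrow> 'a::real_vector set" and nm u N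
  assumes SS: "scaled_space S Es nm" and tp: "0 < \<tau>" and tS: "\<tau> < S"
    and TM: "tau_morphism S Es nm \<tau> u" and OB: "one_bound_const Es nm \<tau> u N"
begin

lemma Nnn: "N \<ge> 0" using OB unfolding one_bound_const_def by simp

lemma mono_sp: assumes "0 < s" "s < s'" "s' < S" "z \<in> Es s'" shows "z \<in> Es s \<and> nm s z \<le> nm s' z"
proof -
  have H: "\<forall>s\<in>{0<..<S}. \<forall>s'\<in>{0<..<S}. s < s' \<longrightarrow> Es s' \<subseteq> Es s \<and> (\<forall>x\<in>Es s'. nm s x \<le> nm s' x)"
    using SS[unfolded scaled_space_def, THEN conjunct2, THEN conjunct2] .
  have "s \<in> {0<..<S}" "s' \<in> {0<..<S}" using assms by auto
  with H have "Es s' \<subseteq> Es s \<and> (\<forall>x\<in>Es s'. nm s x \<le> nm s' x)" using assms(2) by blast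
  then show ?thesis using assms(4) by blast
qed

lemma in_union: "0 < s \<Longrightarrow> s < S \<Longrightarrow> z \<in> Es s \<Longrightarrow> z \<in> scaled_union S Es"
  unfolding scaled_union_def by auto

lemma u_maps: assumes "0 < s" "s < s'" "s' \<le> \<tau>" "z \<in> Es s'" shows "u z \<in> Es s"
proof -
  have H: "\<forall>s'\<in>{0<..\<tau>}. \<forall>s\<in>{0<..<s'}. u ` Es s' \<subseteq> Es s \<and> (\<exists>C. \<forall>x\<in>Es s'. nm s (u x) \<le> C * nm s' x)"
    using TM[unfolded tau_morphism_def, THEN conjunct2, THEN conjunct2, THEN conjunct2] .
  have "s' \<in> {0<..\<tau>}" "s \<in> {0<..<s'}" using assms by auto
  with H have "u ` Es s' \<subseteq> Es s" by blast
  then show ?thesis using assms(4) by blast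
qed

lemma u_bd: assumes "0 < s" "s < s'" "s' \<le> \<tau>" "z \<in> Es s'"
  shows "nm s (u z) \<le> N / (s' - s) * nm s' z"
proof -
  have "s \<in> {0<..<\<tau>}" "s' - s \<in> {0<..\<tau> - s}" "z \<in> Es (s + (s' - s))" using assms by auto
  then have "nm s (u z) \<le> N / (s' - s) * nm (s + (s' - s)) z"
    using OB unfolding one_bound_const_def by blast
  then show ?thesis by simp
qed

lemma iter:
  "0 < s \<Longrightarrow> s < s' \<Longrightarrow> s' \<le> \<tau> \<Longrightarrow> z \<in> Es s' \<Longrightarrow>
     (u ^^ j) z \<in> Es s \<and> nm s ((u ^^ j) z) \<le> (real j * N / (s' - s)) ^ j * nm s' z"
proof (induction j arbitrary: s)
  case 0
  then show ?case using mono_sp[of s s' z] tS by auto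
next
  case (Suc j)
  show ?case
  proof (cases "j = 0")
    case True
    then show ?thesis using u_maps[OF Suc.prems] u_bd[OF Suc.prems] by simp
  next
    case False
    define \<sigma> where "\<sigma> = s' - s"
    have sg: "\<sigma> > 0" using Suc.prems unfolding \<sigma>_def by simp
    define r where "r = s + \<sigma> / (real j + 1)"
    have jp: "real j \<ge> 1" using False by simp
    have rs: "r > s" unfolding r_def using sg by simp
    have "\<sigma> / (real j + 1) < \<sigma>" using sg jp by (simp add: field_simps)
    then have rs': "r < s'" unfolding r_def \<sigma>_def by simp
    have r0: "r > 0" using rs Suc.prems by simp
    have IH: "(u ^^ j) z \<in> Es r \<and> nm r ((u ^^ j) z) \<le> (real j * N / (s' - r)) ^ j * nm s' z"
      using Suc.IH[of r] r0 rs' Suc.prems by auto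
    have e1: "s' - r = \<sigma> * real j / (real j + 1)" unfolding r_def \<sigma>_def using jp by (simp add: field_simps)
    have e2: "r - s = \<sigma> / (real j + 1)" unfolding r_def by simp
    have t1: "real j * N / (s' - r) = (real j + 1) * N / \<sigma>" unfolding e1 using jp sg by (simp add: field_simps)
    have t2: "N / (r - s) = (real j + 1) * N / \<sigma>" unfolding e2 using jp sg by (simp add: field_simps)
    have mem: "(u ^^ Suc j) z \<in> Es s" using u_maps[of s r "(u ^^ j) z"] IH rs' Suc.prems rs by simp
    have "nm s ((u ^^ Suc j) z) = nm s (u ((u ^^ j) z))" by simp
    also have "\<dots> \<le> N / (r - s) * nm r ((u ^^ j) z)"
      using u_bd[of s r "(u ^^ j) z"] IH rs' Suc.prems rs by simp
    also have "\<dots> \<le> N / (r - s) * ((real j * N / (s' - r)) ^ j * nm s' z)"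
      using IH Nnn rs by (intro mult_left_mono) auto
    also have "\<dots> = ((real j + 1) * N / \<sigma>) ^ Suc j * nm s' z" unfolding t1 t2 by simp
    also have "\<dots> = (real (Suc j) * N / (s' - s)) ^ Suc j * nm s' z" unfolding \<sigma>_def by (simp add: add.commute)
    finally show ?thesis using mem by simp
  qed
qed

lemma funpow_union: "z \<in> scaled_union S Es \<Longrightarrow> (u ^^ j) z \<in> scaled_union S Es"
  using TM unfolding tau_morphism_def by (induction j) auto

lemma funpow_neg: "z \<in> scaled_union S Es \<Longrightarrow> ((\<lambda>z. - u z) ^^ j) z = ((-1) ^ j) *\<^sub>R (u ^^ j) z"
proof (induction j)
  case 0 then show ?case by simp
next
  case (Suc j)
  have "u (((-1) ^ j) *\<^sub>R (u ^^ j) z) = ((-1) ^ j) *\<^sub>R u ((u ^^ j) z)"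
    using TM funpow_union[OF Suc.prems] unfolding tau_morphism_def by blast
  then show ?case using Suc by simp
qed

lemma funpow_add: "a \<in> scaled_union S Es \<Longrightarrow> b \<in> scaled_union S Es \<Longrightarrow> (u ^^ j) (a + b) = (u ^^ j) a + (u ^^ j) b"
proof (induction j)
  case 0 then show ?case by simp
next
  case (Suc j)
  have "u ((u ^^ j) a + (u ^^ j) b) = u ((u ^^ j) a) + u ((u ^^ j) b)"
    using TM funpow_union[OF Suc.prems(1)] funpow_union[OF Suc.prems(2)] unfolding tau_morphism_def by blast
  then show ?case using Suc by simp
qed

end



lemma RL1: assumes "0 \<le> t" "0 \<le> m" shows "(real j * t) ^ j * m \<le> fact j * (3 * t) ^ j * m"
proof -
  have "(real j * t) ^ j = real j ^ j * t ^ j" by (simp add: power_mult_distrib)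
  also have "\<dots> \<le> (3 ^ j * fact j) * t ^ j" using pow_fact_le0[of j] assms by (intro mult_right_mono) auto
  also have "\<dots> = fact j * (3 * t) ^ j" by (simp add: power_mult_distrib)
  finally show ?thesis using assms by (intro mult_right_mono) auto
qed

lemma RL2: assumes "0 \<le> t" "0 \<le> m" "j \<ge> 1" shows "(real j * t) ^ j * m \<le> fact j * 3 ^ (j - 1) * t ^ j * m"
proof -
  have "(real j * t) ^ j = real j ^ j * t ^ j" by (simp add: power_mult_distrib)
  also have "\<dots> \<le> (3 ^ (j - 1) * fact j) * t ^ j" using pow_fact_le[of j] assms by (intro mult_right_mono) auto
  finally show ?thesis using assms by (intro mult_right_mono) (auto simp: mult_ac)
qed

lemma coef_id: "(-1) ^ n / fact n + (-1) ^ Suc n / fact (Suc n) = ((-1) ^ n * real n / fact (Suc n) :: real)"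
proof -
  have f: "fact (Suc n) = (real n + 1) * fact n" by (simp add: algebra_simps)
  have p: "(0::real) < fact n" by simp
  have "(-1) ^ n / fact n + (-1) ^ Suc n / ((real n + 1) * fact n) = ((-1) ^ n * real n / ((real n + 1) * fact n) :: real)"
    using p by (simp add: divide_simps) (simp add: algebra_simps)
  then show ?thesis unfolding f .
qed

lemma D_ident:
  fixes v :: "nat \<Rightarrow> 'a::real_vector"
  shows "(\<Sum>j<Suc n. ((-1) ^ j / fact j) *\<^sub>R (v j + v (Suc j))) - v 0
     = (\<Sum>k<n. ((-1) ^ k * real k / fact (Suc k)) *\<^sub>R v (Suc k)) + ((-1) ^ n / fact n) *\<^sub>R v (Suc n)"
proof (induction n)
  case 0 then show ?case by simp
next
  case (Suc n)
  have "(\<Sum>j<Suc (Suc n). ((-1) ^ j / fact j) *\<^sub>R (v j + v (Suc j))) - v 0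
      = ((\<Sum>j<Suc n. ((-1) ^ j / fact j) *\<^sub>R (v j + v (Suc j))) - v 0)
        + ((-1) ^ Suc n / fact (Suc n)) *\<^sub>R (v (Suc n) + v (Suc (Suc n)))" by simp
  also have "\<dots> = (\<Sum>k<n. ((-1) ^ k * real k / fact (Suc k)) *\<^sub>R v (Suc k))
        + (((-1) ^ n / fact n) + ((-1) ^ Suc n / fact (Suc n))) *\<^sub>R v (Suc n)
        + ((-1) ^ Suc n / fact (Suc n)) *\<^sub>R v (Suc (Suc n))"
    unfolding Suc by (simp add: scaleR_add_right scaleR_add_left algebra_simps)
  also have "\<dots> = (\<Sum>k<Suc n. ((-1) ^ k * real k / fact (Suc k)) *\<^sub>R v (Suc k))
        + ((-1) ^ Suc n / fact (Suc n)) *\<^sub>R v (Suc (Suc n))"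
    unfolding coef_id by simp
  finally show ?case .
qed




theorem mainTheorem9:
  fixes S \<tau> s :: real and Es :: "real \<Rightarrow> 'a::real_vector set" and nm :: "real \<Rightarrow> 'a \<Rightarrow> real"
    and u :: "'a \<Rightarrow> 'a" and x :: 'a
  assumes "scaled_space S Es nm"
    and "0 < \<tau>" and "\<tau> < S"
    and "tau_morphism S Es nm \<tau> u"
    and "one_bounded Es nm \<tau> u"
    and "0 < s" and "s < \<tau>"
    and "3 * N1 Es nm \<tau> u / (\<tau> - s) \<le> 1 / 2"
    and "x \<in> Es \<tau>"
  shows "(\<exists>y. exp_conv Es nm s (\<lambda>z. - u z) (x + u x) y \<and>
            nm s (y - x) \<le> 36 * nm \<tau> x / (\<tau> - s)^2 * (N1 Es nm \<tau> u)^2)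
       \<and> (u x \<in> Es \<tau> \<longrightarrow> (\<exists>y. exp_conv Es nm s (\<lambda>z. - u z) (x + u x) y \<and>
            nm s (y - x) \<le> 2 * nm \<tau> (u x) / (\<tau> - s) * N1 Es nm \<tau> u))
       \<and> (\<exists>y. exp_conv Es nm s (\<lambda>z. - u z) x y \<and>
            nm s (y - x) \<le> 6 * nm \<tau> x / (\<tau> - s) * N1 Es nm \<tau> u)
       \<and> (u x \<in> Es \<tau> \<longrightarrow> (\<exists>y. exp_conv Es nm s (\<lambda>z. - u z) x y \<and>
            nm s (y - x) \<le> 2 * nm \<tau> (u x)))
       \<and> (\<exists>y. exp_conv Es nm s u x y \<and> nm s y \<le> 2 * nm \<tau> x)"
proof -
  note SS = assms(1) and tp = assms(2) and tS = assms(3) and TM = assms(4)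
  define N where "N = N1 Es nm \<tau> u"
  have OB: "one_bound_const Es nm \<tau> u N" unfolding N_def by (rule N1_ok[OF assms(5)])
  have Nn: "N \<ge> 0" using OB unfolding one_bound_const_def by simp
  have sI: "s \<in> {0<..<S}" using assms by auto
  note add = sp_add[OF SS sI] and scal = sp_scal[OF SS sI] and nn = sp_nn[OF SS sI]
    and hom = sp_hom[OF SS sI] and tri = sp_tri[OF SS sI] and diff = sp_diff[OF SS sI]
    and ssum = sp_sum[OF SS sI] and sumnorm = sp_sumnorm[OF SS sI]
    and conv = sp_conv[OF SS sI] and limb = sp_limbound[OF SS sI] and zero = sp_zero[OF SS sI]
  note iter = iter[OF SS tp tS TM OB]
  define \<sigma> where "\<sigma> = \<tau> - s"
  have sg: "\<sigma> > 0" using assms unfolding \<sigma>_def by simp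
  define t where "t = N / \<sigma>"
  define q where "q = 3 * t"
  have t0: "t \<ge> 0" unfolding t_def using Nn sg by simp
  have q0: "q \<ge> 0" unfolding q_def using t0 by simp
  have q2: "q \<le> 1/2" unfolding q_def t_def using assms(8) unfolding N_def \<sigma>_def by simp
  have q1: "q < 1" using q2 by simp
  define m where "m = nm \<tau> x"
  have tI: "\<tau> \<in> {0<..<S}" using assms by auto
  have m0: "m \<ge> 0" unfolding m_def using sp_nn[OF SS tI] assms(9) by simp
  define v where "v j = (u ^^ j) x" for j
  have V: "v j \<in> Es s \<and> nm s (v j) \<le> (real j * t) ^ j * m" for j
    using iter[of s \<tau> x j] assms unfolding v_def m_def t_def \<sigma>_def by simp
  have vE: "v j \<in> Es s" for j using V by blast
  have xU: "x \<in> scaled_union S Es" using in_union[OF SS tp tS TM OB, of \<tau> x] assms by simp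
  have v0: "v 0 = x" unfolding v_def by simp
  have Vb0: "inverse (fact j) * nm s (v j) \<le> q ^ j * m" for j
  proof -
    have "nm s (v j) \<le> fact j * (3 * t) ^ j * m" using V[of j] RL1[OF t0 m0, of j] by linarith
    then show ?thesis unfolding q_def by (simp add: field_simps)
  qed
  have sumq: "summable (\<lambda>j. q ^ j * m)"
    by (intro summable_mult2 summable_geometric) (use q0 q1 in auto)
  have negx: "((\<lambda>z. - u z) ^^ j) x = ((-1) ^ j) *\<^sub>R v j" for j
    using funpow_neg[OF SS tp tS TM OB xU] unfolding v_def by simp
  have I5: "\<exists>y. exp_conv Es nm s u x y \<and> nm s y \<le> 2 * nm \<tau> x"
  proof -
    define a where "a j = inverse (fact j) *\<^sub>R v j" for j
    have aE: "a j \<in> Es s" for j unfolding a_def using vE scal by blast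
    have an: "nm s (a j) \<le> q ^ j * m" for j unfolding a_def using hom[OF vE] Vb0 by simp
    obtain y where y: "y \<in> Es s" and lim: "(\<lambda>n. nm s ((\<Sum>j<n. a j) - y)) \<longlonglongrightarrow> 0"
      using conv[OF aE an sumq] by blast
    have "nm s (y - 0) \<le> 2 * m"
    proof (rule limb[OF y _ lim zero, of 0])
      show "(\<Sum>j<n. a j) \<in> Es s" for n using aE by (intro ssum) auto
      fix n :: nat
      have "nm s ((\<Sum>j<n. a j) - 0) \<le> (\<Sum>j<n. nm s (a j))" using sumnorm[of "{..<n}" a] aE by simp
      also have "\<dots> \<le> (\<Sum>j<n. q ^ j * m)" using an by (intro sum_mono) auto
      also have "\<dots> = (\<Sum>j<n. q ^ j) * m" by (simp add: sum_distrib_right)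
      also have "\<dots> \<le> 2 * m" using geom_le2[OF q0 q2] m0 by (intro mult_right_mono) auto
      finally show "nm s ((\<Sum>j<n. a j) - 0) \<le> 2 * m" .
    qed
    moreover have "exp_conv Es nm s u x y"
      unfolding exp_conv_def using vE y lim unfolding a_def v_def by auto
    ultimately show ?thesis unfolding m_def by auto
  qed
  have xsE: "x \<in> Es s" using vE[of 0] v0 by simp
  define b where "b j = inverse (fact j) *\<^sub>R (((-1) ^ j) *\<^sub>R v j)" for j
  have bE: "b j \<in> Es s" for j unfolding b_def using vE scal by blast
  have bn: "nm s (b j) = inverse (fact j) * nm s (v j)" for j
    unfolding b_def using hom[OF scal[OF vE]] hom[OF vE] by (simp add: abs_mult power_abs)
  obtain yb where yb: "yb \<in> Es s" and limb': "(\<lambda>n. nm s ((\<Sum>j<n. b j) - yb)) \<longlonglongrightarrow> 0"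
    using conv[OF bE _ sumq] bn Vb0 by fastforce
  have ecb: "exp_conv Es nm s (\<lambda>z. - u z) x yb"
    unfolding exp_conv_def negx using scal[OF vE] yb limb' unfolding b_def by auto
  have b0: "b 0 = x" unfolding b_def v0 by simp
  have bshift: "(\<Sum>j<Suc k. b j) - x = (\<Sum>j<k. b (Suc j))" for k
    unfolding sum.lessThan_Suc_shift b0 by simp
  have I3: "\<exists>y. exp_conv Es nm s (\<lambda>z. - u z) x y \<and> nm s (y - x) \<le> 6 * nm \<tau> x / (\<tau> - s) * N1 Es nm \<tau> u"
  proof -
    have "nm s (yb - x) \<le> 2 * q * m"
    proof (rule limb[where N=1, OF yb _ limb' xsE])
      show "(\<Sum>j<n. b j) \<in> Es s" for n using bE by (intro ssum) auto
      fix n :: nat assume "1 \<le> n"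
      then obtain k where k: "n = Suc k" by (cases n) auto
      have "nm s ((\<Sum>j<n. b j) - x) = nm s (\<Sum>j<k. b (Suc j))" unfolding k bshift ..
      also have "\<dots> \<le> (\<Sum>j<k. nm s (b (Suc j)))" using sumnorm[of "{..<k}" "\<lambda>j. b (Suc j)"] bE by simp
      also have "\<dots> \<le> (\<Sum>j<k. q * (q ^ j * m))"
      proof (intro sum_mono)
        fix j
        have "nm s (b (Suc j)) \<le> q ^ (Suc j) * m" using Vb0[of "Suc j"] unfolding bn[of "Suc j"] .
        then show "nm s (b (Suc j)) \<le> q * (q ^ j * m)" by (simp add: mult_ac)
      qed
      also have "\<dots> = q * m * (\<Sum>j<k. q ^ j)" by (simp add: sum_distrib_left sum_distrib_right mult_ac)
      also have "\<dots> \<le> q * m * 2" using geom_le2[OF q0 q2] m0 q0 by (intro mult_left_mono) auto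
      finally show "nm s ((\<Sum>j<n. b j) - x) \<le> 2 * q * m" by simp
    qed
    moreover have "2 * q * m = 6 * nm \<tau> x / (\<tau> - s) * N1 Es nm \<tau> u"
      unfolding q_def t_def m_def \<sigma>_def N_def by simp
    ultimately show ?thesis using ecb by auto
  qed
  have I4: "u x \<in> Es \<tau> \<longrightarrow> (\<exists>y. exp_conv Es nm s (\<lambda>z. - u z) x y \<and> nm s (y - x) \<le> 2 * nm \<tau> (u x))"
  proof
    assume ux: "u x \<in> Es \<tau>"
    define M where "M = nm \<tau> (u x)"
    have M0: "M \<ge> 0" unfolding M_def using sp_nn[OF SS tI] ux by simp
    have vS: "v (Suc j) = (u ^^ j) (u x)" for j unfolding v_def funpow_Suc_right comp_def ..
    have W: "nm s (v (Suc j)) \<le> (real j * t) ^ j * M" for j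
      using iter[of s \<tau> "u x" j] assms ux unfolding vS M_def t_def \<sigma>_def by simp
    have Wb: "nm s (b (Suc j)) \<le> q ^ j * M" for j
    proof -
      have "nm s (v (Suc j)) \<le> fact j * q ^ j * M" using W[of j] RL1[OF t0 M0, of j] unfolding q_def by linarith
      also have "\<dots> \<le> fact (Suc j) * q ^ j * M" using q0 M0 by (intro mult_right_mono fact_mono) auto
      finally have "nm s (v (Suc j)) \<le> fact (Suc j) * (q ^ j * M)" by (simp only: mult.assoc)
      then have "inverse (fact (Suc j)) * nm s (v (Suc j)) \<le> inverse (fact (Suc j)) * (fact (Suc j) * (q ^ j * M))"
        by (intro mult_left_mono) auto
      also have "\<dots> = q ^ j * M" by (simp del: fact_Suc)
      finally show ?thesis unfolding bn .
    qed
    have "nm s (yb - x) \<le> 2 * M"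
    proof (rule limb[where N=1, OF yb _ limb' xsE])
      show "(\<Sum>j<n. b j) \<in> Es s" for n using bE by (intro ssum) auto
      fix n :: nat assume "1 \<le> n"
      then obtain k where k: "n = Suc k" by (cases n) auto
      have "nm s ((\<Sum>j<n. b j) - x) = nm s (\<Sum>j<k. b (Suc j))" unfolding k bshift ..
      also have "\<dots> \<le> (\<Sum>j<k. nm s (b (Suc j)))" using sumnorm[of "{..<k}" "\<lambda>j. b (Suc j)"] bE by simp
      also have "\<dots> \<le> (\<Sum>j<k. q ^ j * M)" using Wb by (intro sum_mono) simp
      also have "\<dots> = (\<Sum>j<k. q ^ j) * M" by (simp add: sum_distrib_right)
      also have "\<dots> \<le> 2 * M" using geom_le2[OF q0 q2] M0 by (intro mult_right_mono) auto
      finally show "nm s ((\<Sum>j<n. b j) - x) \<le> 2 * M" .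
    qed
    then show "\<exists>y. exp_conv Es nm s (\<lambda>z. - u z) x y \<and> nm s (y - x) \<le> 2 * nm \<tau> (u x)"
      using ecb unfolding M_def by auto
  qed
  have uxU: "u x \<in> scaled_union S Es" using TM xU unfolding tau_morphism_def by blast
  define r where "r = \<tau> / 2"
  have rI: "r \<in> {0<..<S}" using assms unfolding r_def by auto
  have uxr: "u x \<in> Es r" using u_maps[OF SS tp tS TM OB, of r \<tau> x] assms unfolding r_def by simp
  have xr: "x \<in> Es r" using mono_sp[OF SS tp tS TM OB, of r \<tau> x] assms unfolding r_def by simp
  have xuU: "x + u x \<in> scaled_union S Es"
    using in_union[OF SS tp tS TM OB, of r "x + u x"] sp_add[OF SS rI xr uxr] rI by simp
  have vS: "v (Suc j) = (u ^^ j) (u x)" for j unfolding v_def funpow_Suc_right comp_def ..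
  have negxu: "((\<lambda>z. - u z) ^^ j) (x + u x) = ((-1) ^ j) *\<^sub>R (v j + v (Suc j))" for j
  proof -
    have "((\<lambda>z. - u z) ^^ j) (x + u x) = ((-1) ^ j) *\<^sub>R ((u ^^ j) x + (u ^^ j) (u x))"
      using funpow_neg[OF SS tp tS TM OB xuU] funpow_add[OF SS tp tS TM OB xU uxU] by simp
    then show ?thesis by (simp only: v_def[symmetric] vS[symmetric])
  qed
  define A where "A j = ((-1) ^ j / fact j) *\<^sub>R (v j + v (Suc j))" for j
  have Aeq: "inverse (fact j) *\<^sub>R ((\<lambda>z. - u z) ^^ j) (x + u x) = A j" for j
    unfolding negxu A_def by (simp add: divide_inverse mult.commute)
  have vvE: "v j + v (Suc j) \<in> Es s" for j using add[OF vE vE] .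
  have AE: "A j \<in> Es s" for j unfolding A_def using scal[OF vvE] .
  have An: "nm s (A j) \<le> q ^ j * m + real (Suc j) * q ^ (Suc j) * m" for j
  proof -
    have "nm s (A j) = inverse (fact j) * nm s (v j + v (Suc j))"
      unfolding A_def hom[OF vvE] by (simp add: abs_mult power_abs divide_inverse)
    also have "\<dots> \<le> inverse (fact j) * (nm s (v j) + nm s (v (Suc j)))"
      using tri[OF vE vE] by (intro mult_left_mono) auto
    also have "\<dots> = inverse (fact j) * nm s (v j) + real (Suc j) * (inverse (fact (Suc j)) * nm s (v (Suc j)))"
    proof -
      have fs: "real (Suc j) * inverse (fact (Suc j)) = inverse (fact j :: real)"
        by (simp only: fact_Suc) (simp add: inverse_mult_distrib del: of_nat_Suc)
      show ?thesis unfolding distrib_left mult.assoc[symmetric] fs ..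
    qed
    also have "\<dots> \<le> q ^ j * m + real (Suc j) * (q ^ (Suc j) * m)"
      using Vb0[of j] Vb0[of "Suc j"] by (intro add_mono mult_left_mono) auto
    finally show ?thesis by (simp add: mult_ac)
  qed
  have sumA: "summable (\<lambda>j. q ^ j * m + real (Suc j) * q ^ (Suc j) * m)"
  proof (intro summable_add sumq summableI_nonneg_bounded)
    show "0 \<le> real (Suc j) * q ^ (Suc j) * m" for j using q0 m0 by simp
    fix n
    have "(\<Sum>j<n. real (Suc j) * q ^ (Suc j) * m) = (\<Sum>k<Suc n. real k * q ^ k) * m"
      unfolding sum.lessThan_Suc_shift by (simp add: sum_distrib_right)
    also have "\<dots> \<le> (4 * q) * m" by (rule mult_right_mono[OF arith_geo_le[OF q0 q2] m0])
    finally show "(\<Sum>j<n. real (Suc j) * q ^ (Suc j) * m) \<le> 4 * q * m" .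
  qed
  obtain yA where yA: "yA \<in> Es s" and limA: "(\<lambda>n. nm s ((\<Sum>j<n. A j) - yA)) \<longlonglongrightarrow> 0"
    using conv[OF AE An sumA] by blast
  have ecA: "exp_conv Es nm s (\<lambda>z. - u z) (x + u x) yA"
    unfolding exp_conv_def Aeq using scal[OF vvE] yA limA unfolding negxu by auto
  define e where "e k = ((-1) ^ k * real k / fact (Suc k) :: real)" for k
  have DN: "nm s ((\<Sum>j<Suc p. A j) - x) \<le> (\<Sum>k<p. real k / fact (Suc k) * nm s (v (Suc k))) + inverse (fact p) * nm s (v (Suc p))" for p
  proof -
    have "(\<Sum>j<Suc p. A j) - x = (\<Sum>k<p. e k *\<^sub>R v (Suc k)) + ((-1) ^ p / fact p) *\<^sub>R v (Suc p)"
      using D_ident[of v p] unfolding A_def e_def v0 .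
    then have "nm s ((\<Sum>j<Suc p. A j) - x) = nm s ((\<Sum>k<p. e k *\<^sub>R v (Suc k)) + ((-1) ^ p / fact p) *\<^sub>R v (Suc p))" by simp
    also have "\<dots> \<le> nm s (\<Sum>k<p. e k *\<^sub>R v (Suc k)) + nm s (((-1) ^ p / fact p) *\<^sub>R v (Suc p))"
      by (intro tri ssum scal vE)
    also have "\<dots> \<le> (\<Sum>k<p. nm s (e k *\<^sub>R v (Suc k))) + nm s (((-1) ^ p / fact p) *\<^sub>R v (Suc p))"
      using sumnorm[of "{..<p}" "\<lambda>k. e k *\<^sub>R v (Suc k)"] scal[OF vE] by simp
    also have "\<dots> = (\<Sum>k<p. real k / fact (Suc k) * nm s (v (Suc k))) + inverse (fact p) * nm s (v (Suc p))"
      unfolding hom[OF vE] e_def by (simp add: abs_mult power_abs divide_inverse del: fact_Suc)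
    finally show ?thesis .
  qed
  have I1: "\<exists>y. exp_conv Es nm s (\<lambda>z. - u z) (x + u x) y \<and>
            nm s (y - x) \<le> 36 * nm \<tau> x / (\<tau> - s)^2 * (N1 Es nm \<tau> u)^2"
  proof -
    have vb2: "nm s (v (Suc k)) \<le> fact (Suc k) * (q ^ (Suc k) / 3) * m" for k
    proof -
      have "nm s (v (Suc k)) \<le> fact (Suc k) * 3 ^ (Suc k - 1) * t ^ (Suc k) * m"
        using V[of "Suc k"] RL2[OF t0 m0, of "Suc k"] by linarith
      also have "\<dots> = fact (Suc k) * (q ^ (Suc k) / 3) * m" unfolding q_def by (simp add: power_mult_distrib)
      finally show ?thesis .
    qed
    have "nm s (yA - x) \<le> 4 * q^2 * m"
    proof (rule limb[where N=2, OF yA _ limA xsE])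
      show "(\<Sum>j<n. A j) \<in> Es s" for n using AE by (intro ssum) auto
      fix n :: nat assume "2 \<le> n"
      then obtain p where p: "n = Suc p" "p \<ge> 1" by (cases n) auto
      have t1: "real k / fact (Suc k) * nm s (v (Suc k)) \<le> real k * q ^ (Suc k) * m / 3" for k
      proof -
        have "real k / fact (Suc k) * nm s (v (Suc k)) \<le> real k / fact (Suc k) * (fact (Suc k) * (q ^ (Suc k) / 3) * m)"
          using vb2[of k] by (intro mult_left_mono) auto
        also have "\<dots> = real k * q ^ (Suc k) * m / 3" by (simp del: fact_Suc)
        finally show ?thesis .
      qed
      have t2: "inverse (fact p) * nm s (v (Suc p)) \<le> real (Suc p) * q ^ (Suc p) * m / 3"
      proof -
        have "inverse (fact p) * nm s (v (Suc p)) \<le> inverse (fact p) * (fact (Suc p) * (q ^ (Suc p) / 3) * m)"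
          using vb2[of p] by (intro mult_left_mono) auto
        also have "\<dots> = real (Suc p) * q ^ (Suc p) * m / 3" by (simp add: field_simps)
        finally show ?thesis .
      qed
      have "nm s ((\<Sum>j<n. A j) - x) \<le> (\<Sum>k<p. real k * q ^ (Suc k) * m / 3) + real (Suc p) * q ^ (Suc p) * m / 3"
        unfolding p(1) using DN[of p] t1 t2 by (smt (verit) sum_mono)
      also have "\<dots> = (q * (\<Sum>k<Suc p. real k * q ^ k) + q ^ (Suc p)) * m / 3"
        by (simp add: sum_distrib_left sum_distrib_right sum_divide_distrib algebra_simps)
      also have "\<dots> \<le> (q * (4 * q) + q ^ 2) * m / 3"
      proof -
        have "q ^ (Suc p) \<le> q ^ 2" using p(2) q0 q1 by (intro power_decreasing) auto
        moreover have "q * (\<Sum>k<Suc p. real k * q ^ k) \<le> q * (4 * q)"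
          by (rule mult_left_mono[OF arith_geo_le[OF q0 q2] q0])
        ultimately show ?thesis using m0 by (intro divide_right_mono mult_right_mono) auto
      qed
      also have "\<dots> \<le> 4 * q^2 * m" using m0 q0 by (simp add: power2_eq_square algebra_simps)
      finally show "nm s ((\<Sum>j<n. A j) - x) \<le> 4 * q^2 * m" .
    qed
    moreover have "4 * q^2 * m = 36 * nm \<tau> x / (\<tau> - s)^2 * (N1 Es nm \<tau> u)^2"
      unfolding q_def t_def m_def \<sigma>_def N_def by (simp add: power2_eq_square)
    ultimately show ?thesis using ecA by auto
  qed
  have I2: "u x \<in> Es \<tau> \<longrightarrow> (\<exists>y. exp_conv Es nm s (\<lambda>z. - u z) (x + u x) y \<and>
            nm s (y - x) \<le> 2 * nm \<tau> (u x) / (\<tau> - s) * N1 Es nm \<tau> u)"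
  proof
    assume ux: "u x \<in> Es \<tau>"
    define M where "M = nm \<tau> (u x)"
    have M0: "M \<ge> 0" unfolding M_def using sp_nn[OF SS tI] ux by simp
    have W: "nm s (v (Suc j)) \<le> (real j * t) ^ j * M" for j
      using iter[of s \<tau> "u x" j] assms ux unfolding vS M_def t_def \<sigma>_def by simp
    have Wq: "nm s (v (Suc (Suc k))) \<le> fact (Suc k) * (t * q ^ k) * M" for k
    proof -
      have "nm s (v (Suc (Suc k))) \<le> fact (Suc k) * 3 ^ (Suc k - 1) * t ^ (Suc k) * M"
        using W[of "Suc k"] RL2[OF t0 M0, of "Suc k"] by linarith
      also have "\<dots> = fact (Suc k) * (t * q ^ k) * M" unfolding q_def by (simp add: power_mult_distrib mult_ac)
      finally show ?thesis .
    qed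
    have "nm s (yA - x) \<le> 2 * t * M"
    proof (rule limb[where N=2, OF yA _ limA xsE])
      show "(\<Sum>j<n. A j) \<in> Es s" for n using AE by (intro ssum) auto
      fix n :: nat assume "2 \<le> n"
      then obtain r where p: "n = Suc (Suc r)" by (metis add_2_eq_Suc le_Suc_ex)
      have g: "real (Suc k) / fact (Suc (Suc k)) * nm s (v (Suc (Suc k))) \<le> t * q ^ k * M" for k
      proof -
        have "real (Suc k) / fact (Suc (Suc k)) * nm s (v (Suc (Suc k)))
            \<le> real (Suc k) / fact (Suc (Suc k)) * (fact (Suc k) * (t * q ^ k) * M)"
          using Wq[of k] by (intro mult_left_mono) auto
        also have "\<dots> = (real (Suc k) / real (Suc (Suc k))) * (t * q ^ k * M)"
          by (simp only: fact_Suc[of "Suc k"]) (simp add: field_simps del: of_nat_Suc fact_Suc)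
        also have "\<dots> \<le> 1 * (t * q ^ k * M)" using t0 q0 M0 by (intro mult_right_mono) auto
        finally show ?thesis by simp
      qed
      have rem: "inverse (fact (Suc r)) * nm s (v (Suc (Suc r))) \<le> t * q ^ r * M"
      proof -
        have "inverse (fact (Suc r)) * nm s (v (Suc (Suc r))) \<le> inverse (fact (Suc r)) * (fact (Suc r) * (t * q ^ r) * M)"
          using Wq[of r] by (intro mult_left_mono) auto
        also have "\<dots> = t * q ^ r * M" by (simp del: fact_Suc)
        finally show ?thesis .
      qed
      have "nm s ((\<Sum>j<n. A j) - x) \<le> (\<Sum>k<Suc r. real k / fact (Suc k) * nm s (v (Suc k))) + inverse (fact (Suc r)) * nm s (v (Suc (Suc r)))"
        unfolding p using DN[of "Suc r"] by simp
      also have "(\<Sum>k<Suc r. real k / fact (Suc k) * nm s (v (Suc k))) = (\<Sum>k<r. real (Suc k) / fact (Suc (Suc k)) * nm s (v (Suc (Suc k))))"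
        unfolding sum.lessThan_Suc_shift by simp
      also have "\<dots> \<le> (\<Sum>k<r. t * q ^ k * M)" using g by (intro sum_mono) auto
      finally have "nm s ((\<Sum>j<n. A j) - x) \<le> (\<Sum>k<r. t * q ^ k * M) + t * q ^ r * M" using rem by linarith
      also have "\<dots> = t * M * (\<Sum>k<Suc r. q ^ k)" by (simp add: sum_distrib_left sum_distrib_right algebra_simps)
      also have "\<dots> \<le> t * M * 2" by (rule mult_left_mono[OF geom_le2[OF q0 q2]]) (use t0 M0 in simp)
      finally show "nm s ((\<Sum>j<n. A j) - x) \<le> 2 * t * M" by simp
    qed
    moreover have "2 * t * M = 2 * nm \<tau> (u x) / (\<tau> - s) * N1 Es nm \<tau> u"
      unfolding t_def M_def \<sigma>_def N_def by simp
    ultimately show "\<exists>y. exp_conv Es nm s (\<lambda>z. - u z) (x + u x) y \<and>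
            nm s (y - x) \<le> 2 * nm \<tau> (u x) / (\<tau> - s) * N1 Es nm \<tau> u" using ecA by auto
  qed
  show ?thesis using I1 I2 I3 I4 I5 by blast
qed


end
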